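(* Let $m\ge3$, $p\ne q\in[m]$, and let $\lambda_1,\lambda_2,\lambda_3$ be $\mathbb{Z}_2$-characteristic maps over $P_m$ with $\lambda_i(p)=\mathbf a$ and $\lambda_i(q)=\mathbf b$ for $i=1,2,3$, such that $\lambda_1,\lambda_2$ are $p$-adjacent and $\lambda_1,\lambda_3$ are $q$-adjacent. Then the following are equivalent: (1) the edges $\{\lambda_1,\lambda_2,p\}$ and $\{\lambda_1,\lambda_3,q\}$ span a realizable square, i.e. there is a $\mathbb{Z}_2$-characteristic map $\Lambda$ over $\mathrm{wed}_{p,q}P_m$ with $\operatorname{proj}_{\{p_2,q_2\}}\Lambda\simeq\lambda_1$, $\operatorname{proj}_{\{p_1,q_2\}}\Lambda\simeq\lambda_2$, $\operatorname{proj}_{\{p_2,q_1\}}\Lambda\simeq\lambda_3$; (2) $\overline{\lambda_1\Delta\lambda_2}\cap(\lambda_1\Delta\lambda_3)=\varnothing$; (3) $\overline{\lambda_1\Delta\lambda_2}\cap\overline{\lambda_1\Delta\lambda_3}=\varnothing$.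
   Context: $P_m$: simplicial complex on $[m]$ with facets $\{i,i+1\}$ mod $m$. $\mathbf a=(1,0)^T,\mathbf b=(0,1)^T,\mathbf c=(1,1)^T$; a $\mathbb{Z}_2$-characteristic map over $P_m$ is a map $[m]\to\{\mathbf a,\mathbf b,\mathbf c\}$ with $\lambda(i)\ne\lambda(i+1)$ mod $m$; $\simeq$ is D-J equivalence (composition with an element of $GL(n,\mathbb{Z}_2)$). For characteristic maps $\mu,\nu$, $\mu\Delta\nu=\{v\in[m]:\mu(v)\ne\nu(v)\}$; for $A\subseteq[m]$, $\overline A=\{v-1,v,v+1 \bmod m: v\in A\}$. Wedges: $\mathrm{wed}_pK$ replaces $p$ by $p_1,p_2$, with minimal non-faces those of $K$ with $p$ replaced by $\{p_1,p_2\}$ when it occurs; $\mathrm{wed}_{p,q}K$ does this for both $p$ and $q$. Projection: $\operatorname{proj}_\sigma\Lambda(w)=[\Lambda(w)]\in\mathbb{Z}_2^n/\langle\Lambda(v):v\in\sigma\rangle$ for $w$ in the link of $\sigma$; links of $p_2$ (resp. $p_1$) in $\mathrm{wed}_pK$ are identified with $K$ via $p_1\mapsto p$ (resp. $p_2\mapsto p$), and the link of $\{p_i,q_j\}$ in $\mathrm{wed}_{p,q}P_m$ with $P_m$ via $p_{3-i}\mapsto p,q_{3-j}\mapsto q$. D-J classes $\lambda,\lambda'$ over $P_m$ are $p$-adjacent if some characteristic map $\Lambda$ over $\mathrm{wed}_pP_m$ has $\operatorname{proj}_{p_2}\Lambda\simeq\lambda$, $\operatorname{proj}_{p_1}\Lambda\simeq\lambda'$.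 *)

theory Defs
  imports "HOL-Analysis.Analysis" "HOL-Library.Z2"
begin

text \<open>Vectors over Z_2: the type bit (HOL-Library.Z2) is the field with two elements;
  Z_2^n is bit^'n for a numeral type 'n.  Vertex set [m] is encoded as {0..<m}.\<close>

definition va :: "bit^2" where "va = (\<chi> i. if i = 0 then 1 else 0)"
definition vb :: "bit^2" where "vb = (\<chi> i. if i = 1 then 1 else 0)"
definition vc :: "bit^2" where "vc = (\<chi> i. 1)"

text \<open>Z_2-characteristic map over P_m (as in the context).\<close>
definition char_Pm :: "nat \<Rightarrow> (nat \<Rightarrow> bit^2) \<Rightarrow> bool" where
  "char_Pm m l \<longleftrightarrow> (\<forall>i<m. l i \<in> {va, vb, vc}) \<and> (\<forall>i<m. l i \<noteq> l (Suc i mod m))"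

text \<open>Faces of P_m: subsets of the facets {i, i+1 mod m}.\<close>
definition Pm_faces :: "nat \<Rightarrow> nat set set" where
  "Pm_faces m = {\<sigma>. \<exists>i<m. \<sigma> \<subseteq> {i, Suc i mod m}}"

text \<open>Minimal non-faces of a complex K on vertex set V.\<close>
definition min_nonfaces :: "'v set \<Rightarrow> 'v set set \<Rightarrow> 'v set set" where
  "min_nonfaces V K = {S. S \<subseteq> V \<and> S \<notin> K \<and> (\<forall>T. T \<subset> S \<longrightarrow> T \<in> K)}"

text \<open>Wedge along a set W of vertices: each w in W is replaced by (w,1),(w,2);
  other vertices v become (v,0).\<close>
definition wed_verts :: "'v set \<Rightarrow> 'v set \<Rightarrow> ('v \<times> nat) set" where
  "wed_verts V W = (\<lambda>v. (v, 0)) ` (V - W) \<union> (W \<times> {1, 2})"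

definition wed_lift :: "'v set \<Rightarrow> 'v set \<Rightarrow> ('v \<times> nat) set" where
  "wed_lift W S = (\<lambda>v. (v, 0)) ` (S - W) \<union> ((S \<inter> W) \<times> {1, 2})"

text \<open>Faces of wed_W K: vertex subsets containing no minimal non-face of wed_W K,
  where the minimal non-faces are those of K with each w in W replaced by {w_1,w_2}.\<close>
definition wed :: "'v set \<Rightarrow> 'v set \<Rightarrow> 'v set set \<Rightarrow> ('v \<times> nat) set set" where
  "wed V W K = {\<sigma>. \<sigma> \<subseteq> wed_verts V W \<and> (\<forall>N \<in> min_nonfaces V K. \<not> wed_lift W N \<subseteq> \<sigma>)}"

text \<open>Z_2-characteristic map over a complex K (target Z_2^n):
  images of every face are distinct and linearly independent.\<close>
definition char_map :: "'v set set \<Rightarrow> ('v \<Rightarrow> bit^'n) \<Rightarrow> bool" where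
  "char_map K \<Lambda> \<longleftrightarrow> (\<forall>\<sigma>\<in>K. inj_on \<Lambda> \<sigma> \<and> vec.independent (\<Lambda> ` \<sigma>))"

text \<open>proj_\<sigma> \<Lambda> \<simeq> \<lambda>, where the link of \<sigma> is identified with P_m via \<iota>:
  there is an isomorphism from Z_2^n / <\<Lambda>(v) : v\<in>\<sigma>> onto Z_2^2 carrying
  [\<Lambda>(\<iota> w)] to \<lambda>(w).  Such an isomorphism is the same thing as a surjective linear
  map Z_2^n \<rightarrow> Z_2^2 whose kernel is the span of \<Lambda>(\<sigma>).\<close>
definition proj_equiv ::
  "nat \<Rightarrow> ('v \<Rightarrow> bit^'n) \<Rightarrow> 'v set \<Rightarrow> (nat \<Rightarrow> 'v) \<Rightarrow> (nat \<Rightarrow> bit^2) \<Rightarrow> bool" where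
  "proj_equiv m \<Lambda> \<sigma> \<iota> l \<longleftrightarrow>
     (\<exists>\<phi> :: bit^'n \<Rightarrow> bit^2.
        Vector_Spaces.linear (*s) (*s) \<phi> \<and> surj \<phi> \<and>
        {x. \<phi> x = 0} = vec.span (\<Lambda> ` \<sigma>) \<and>
        (\<forall>w<m. \<phi> (\<Lambda> (\<iota> w)) = l w))"

text \<open>Identification of P_m-vertices with wedge vertices: v in W goes to (v, f v).\<close>
definition wid :: "nat set \<Rightarrow> (nat \<Rightarrow> nat) \<Rightarrow> nat \<Rightarrow> nat \<times> nat" where
  "wid W f v = (if v \<in> W then (v, f v) else (v, 0))"

text \<open>p-adjacency: some \<Lambda> over wed_p P_m with proj_{p_2} \<Lambda> \<simeq> l (link identified via
  p_1 \<mapsto> p) and proj_{p_1} \<Lambda> \<simeq> l' (link identified via p_2 \<mapsto> p).\<close>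
definition p_adjacent :: "nat \<Rightarrow> nat \<Rightarrow> (nat \<Rightarrow> bit^2) \<Rightarrow> (nat \<Rightarrow> bit^2) \<Rightarrow> bool" where
  "p_adjacent m p l l' \<longleftrightarrow>
     (\<exists>\<Lambda> :: nat \<times> nat \<Rightarrow> bit^3.
        char_map (wed {0..<m} {p} (Pm_faces m)) \<Lambda> \<and>
        proj_equiv m \<Lambda> {(p, 2)} (wid {p} (\<lambda>_. 1)) l \<and>
        proj_equiv m \<Lambda> {(p, 1)} (wid {p} (\<lambda>_. 2)) l')"

definition sdiff_maps :: "nat \<Rightarrow> (nat \<Rightarrow> bit^2) \<Rightarrow> (nat \<Rightarrow> bit^2) \<Rightarrow> nat set" where
  "sdiff_maps m \<mu> \<nu> = {v. v < m \<and> \<mu> v \<noteq> \<nu> v}"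

definition nbhd :: "nat \<Rightarrow> nat set \<Rightarrow> nat set" where
  "nbhd m A = (\<Union>v\<in>A. {(v + m - 1) mod m, v, Suc v mod m})"

end

theory Submission
  imports Defs
begin


section \<open>Bits\<close>

definition Bt :: "bit \<Rightarrow> bool" where "Bt x \<longleftrightarrow> x = 1"

lemma bit_eqB: "((x::bit) = y) \<longleftrightarrow> (Bt x \<longleftrightarrow> Bt y)"
  unfolding Bt_def by (cases x; cases y) simp_all

lemma Bt_simps: "\<not> Bt 0" "Bt 1"
  unfolding Bt_def by simp_all

lemmas bitB = bit_eqB Bt_simps

lemma bit_cases: "(x::bit) = 0 \<or> x = 1" by (cases x) simp_all

lemma bit_add_self [simp]: "(x::bit) + x = 0" by (cases x) simp_all

lemma vec_add_self [simp]: "(x::bit^'n) + x = 0"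
  by (simp add: vec_eq_iff)

lemma vec_add_eq0: "(x::bit^'n) + y = 0 \<longleftrightarrow> x = y"
proof
  assume "x + y = 0"
  then have "x + y + y = y" by simp
  then show "x = y" by (simp add: add.assoc)
qed simp

lemma vec_add_eq: "(x::bit^'n) + y = z \<longleftrightarrow> x = z + y"
proof
  assume "x + y = z"
  then have "x + y + y = z + y" by simp
  then show "x = z + y" by (simp add: add.assoc)
next
  assume "x = z + y"
  then show "x + y = z" by (simp add: add.assoc)
qed

section \<open>Vectors in bit^2\<close>

lemma coords [simp]: "va $ 1 = 0" "va $ 2 = 1" "vb $ 1 = 1" "vb $ 2 = 0" "vc $ 1 = 1" "vc $ 2 = 1"
  by (simp_all add: va_def vb_def vc_def)

lemma vec2_eq: "(x::bit^2) = y \<longleftrightarrow> x$1 = y$1 \<and> x$2 = y$2"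
  by (simp add: vec_eq_iff forall_2)

lemma vec2_decomp: "(z::bit^2) = z$2 *s va + z$1 *s vb"
  by (simp add: vec2_eq)

lemma vneq [simp]: "va \<noteq> vb" "vb \<noteq> va" "va \<noteq> vc" "vc \<noteq> va" "vb \<noteq> vc" "vc \<noteq> vb"
  by (simp_all add: vec2_eq)

lemma char_vals: "char_Pm m l \<Longrightarrow> v < m \<Longrightarrow> l v \<in> {va,vb,vc}"
  unfolding char_Pm_def by blast

lemma char_nz: "char_Pm m l \<Longrightarrow> v < m \<Longrightarrow> l v $ 1 \<noteq> 0 \<or> l v $ 2 \<noteq> 0"
  using char_vals[of m l v] by auto

lemma char_nz': "char_Pm m l \<Longrightarrow> v < m \<Longrightarrow> l v \<noteq> 0"
  using char_nz[of m l v] by auto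

lemma char_edge: "char_Pm m l \<Longrightarrow> v < m \<Longrightarrow>
   l v $ 1 \<noteq> l (Suc v mod m) $ 1 \<or> l v $ 2 \<noteq> l (Suc v mod m) $ 2"
  unfolding char_Pm_def by (auto simp: vec2_eq)

lemma is_va: "char_Pm m l \<Longrightarrow> v < m \<Longrightarrow> l v = va \<longleftrightarrow> l v $ 1 = 0"
  using char_vals[of m l v] by auto

lemma is_vb: "char_Pm m l \<Longrightarrow> v < m \<Longrightarrow> l v = vb \<longleftrightarrow> l v $ 2 = 0"
  using char_vals[of m l v] by auto

section \<open>Linear maps and spans\<close>

lemma lin_add: "Vector_Spaces.linear (*s) (*s) (f::'a::field^'n \<Rightarrow> 'a^'m) \<Longrightarrow> f (x+y) = f x + f y"
  by (simp add: Vector_Spaces.linear_def module_hom_def module_hom_axioms_def)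

lemma lin_scale: "Vector_Spaces.linear (*s) (*s) (f::'a::field^'n \<Rightarrow> 'a^'m) \<Longrightarrow> f (c *s x) = c *s f x"
  by (simp add: Vector_Spaces.linear_def module_hom_def module_hom_axioms_def)

lemma lin_I: "(\<And>x y. (f::'a::field^'n \<Rightarrow> 'a^'m) (x+y) = f x + f y) \<Longrightarrow> (\<And>c x. f (c *s x) = c *s f x) \<Longrightarrow> Vector_Spaces.linear (*s) (*s) f"
  by (simp add: Vector_Spaces.linear_def module_hom_def module_hom_axioms_def vec.module_axioms vec.vector_space_axioms)

lemma span1: "vec.span {u::bit^'n} = {0, u}"
proof -
  have "range (\<lambda>k::bit. k *s u) = {0, u}"
  proof
    show "range (\<lambda>k::bit. k *s u) \<subseteq> {0, u}"
    proof
      fix x assume "x \<in> range (\<lambda>k::bit. k *s u)"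
      then obtain k where k: "x = k *s u" by auto
      show "x \<in> {0,u}" using bit_cases[of k] k by auto
    qed
    have "0 \<in> range (\<lambda>k::bit. k *s u)" using rangeI[of "\<lambda>k::bit. k *s u" 0] by simp
    moreover have "u \<in> range (\<lambda>k::bit. k *s u)" using rangeI[of "\<lambda>k::bit. k *s u" 1] by simp
    ultimately show "{0, u} \<subseteq> range (\<lambda>k::bit. k *s u)" by blast
  qed
  then show ?thesis by (simp add: vec.span_singleton)
qed

lemma span2: "vec.span {u, w::bit^'n} = {x. \<exists>s t. x = s *s u + t *s w}"
proof -
  have "vec.span {u,w} = {x. \<exists>k. (x - k *s u) \<in> vec.span {w}}" by (rule vec.span_insert)
  also have "\<dots> = {x. \<exists>s t. x = s *s u + t *s w}"
  proof (intro Collect_cong iffI)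
    fix x
    assume "\<exists>k. x - k *s u \<in> vec.span {w}"
    then obtain k t where "x - k *s u = t *s w" unfolding vec.span_singleton by auto
    then have "x = k *s u + t *s w" by (simp add: diff_eq_eq add.commute)
    then show "\<exists>s t. x = s *s u + t *s w" by blast
  next
    fix x assume "\<exists>s t. x = s *s u + t *s w"
    then obtain s t where "x = s *s u + t *s w" by blast
    then have "x - s *s u = t *s w" by simp
    then show "\<exists>k. x - k *s u \<in> vec.span {w}" unfolding vec.span_singleton by blast
  qed
  finally show ?thesis .
qed

lemma kernel_zero: "{x. f x = 0} = vec.span S \<Longrightarrow> y \<in> S \<Longrightarrow> f y = 0"
  using vec.span_base by blast

section \<open>Neighbourhoods on the cycle\<close>

lemma suc_mod: "(w::nat) < m \<Longrightarrow> Suc w mod m = (if Suc w = m then 0 else Suc w)"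
  by (cases "Suc w = m") simp_all
lemma pred_mod': "0 < (m::nat) \<Longrightarrow> v < m \<Longrightarrow> (v + m - 1) mod m = (if v = 0 then m - 1 else v - 1)"
proof (cases "v = 0")
  case True
  assume "0 < m" then have "m - 1 < m" by arith
  then show ?thesis using True by (simp add: mod_less)
next
  case False
  assume "v < m"
  have "v + m - 1 = (v - 1) + m" using False by arith
  then have "(v + m - 1) mod m = (v - 1) mod m" by simp
  then show ?thesis using False \<open>v < m\<close> by simp
qed
lemma pred_mod: assumes "0 < (m::nat)" "v < m" "w < m" shows "((v + m - 1) mod m = w) \<longleftrightarrow> (Suc w mod m = v)"
proof (cases "v = 0")
  case True
  have "(v + m - 1) mod m = m - 1" using pred_mod'[OF assms(1,2)] True by simp
  moreover have "Suc w mod m = (if Suc w = m then 0 else Suc w)" using suc_mod[OF assms(3)] .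
  ultimately show ?thesis using True assms by auto
next
  case False
  have "(v + m - 1) mod m = v - 1" using pred_mod'[OF assms(1,2)] False by simp
  moreover have "Suc w mod m = (if Suc w = m then 0 else Suc w)" using suc_mod[OF assms(3)] .
  ultimately show ?thesis using False assms by auto
qed
lemma nbhd_mem: "0 < m \<Longrightarrow> w < m \<Longrightarrow> A \<subseteq> {..<m} \<Longrightarrow>
   w \<in> nbhd m A \<longleftrightarrow> (\<exists>v\<in>A. w = v \<or> w = Suc v mod m \<or> v = Suc w mod m)"
proof -
  assume m: "0 < m" and w: "w < m" and A: "A \<subseteq> {..<m}"
  have H: "w = (v + m - 1) mod m \<longleftrightarrow> v = Suc w mod m" if "v \<in> A" for v
  proof -
    have "v < m" using A that by auto
    then show ?thesis using pred_mod[OF m _ w] by (simp add: eq_commute)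
  qed
  show ?thesis unfolding nbhd_def using H by blast
qed

lemma nbhd_sub: "0 < m \<Longrightarrow> A \<subseteq> {..<m} \<Longrightarrow> nbhd m A \<subseteq> {..<m}"
  unfolding nbhd_def by auto

lemma nbhd_self: "0 < m \<Longrightarrow> A \<subseteq> nbhd m A"
  unfolding nbhd_def by auto

lemma bit_add_eq0 [simp]: "(a::bit) + b = 0 \<longleftrightarrow> a = b"
  by (cases a; cases b) simp_all

section \<open>Bit combinatorics\<close>

lemma bE1: fixes a b c d a' b' c' d' :: bit
 assumes "a\<noteq>0 \<or> c\<noteq>0" "b\<noteq>0 \<or> c\<noteq>0" "a\<noteq>0\<or>d\<noteq>0" "a'\<noteq>0 \<or> c'\<noteq>0" "b'\<noteq>0\<or>c'\<noteq>0" "a'\<noteq>0\<or>d'\<noteq>0"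
 and "a\<noteq>a' \<or> c\<noteq>c'" "b\<noteq>b' \<or> c\<noteq>c'" "a\<noteq>a' \<or> d\<noteq>d'"
 and "b=b'" "d=d'"
 shows "(a\<noteq>b \<and> c'\<noteq>d') \<or> (a'\<noteq>b' \<and> c\<noteq>d)"
  using assms unfolding bitB by argo

lemma bE2: fixes a b c d a' b' c' d' :: bit
 assumes "a\<noteq>0 \<or> c\<noteq>0" "b\<noteq>0 \<or> c\<noteq>0" "a\<noteq>0\<or>d\<noteq>0" "a'\<noteq>0 \<or> c'\<noteq>0" "b'\<noteq>0\<or>c'\<noteq>0" "a'\<noteq>0\<or>d'\<noteq>0"
 and "a\<noteq>a' \<or> c\<noteq>c'" "b\<noteq>b' \<or> c\<noteq>c'" "a\<noteq>a' \<or> d\<noteq>d'"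
 and "(a\<noteq>b \<and> c'\<noteq>d') \<or> (a'\<noteq>b' \<and> c\<noteq>d)"
 shows "(b=b' \<and> d=d') \<or> (b=0 \<and> d=0) \<or> (b'=0 \<and> d'=0)"
  using assms unfolding bitB by argo

lemma bV: fixes a b c d :: bit
 assumes "a\<noteq>0 \<or> c\<noteq>0" "b\<noteq>0 \<or> c\<noteq>0" "a\<noteq>0\<or>d\<noteq>0"
 shows "(b=0 \<and> d=0) \<longleftrightarrow> (a\<noteq>b \<and> c\<noteq>d)"
  using assms unfolding bitB by argo

lemma bPath: fixes av bv cv ax cx aw cw dw :: bit
 assumes "av\<noteq>0 \<or> cv\<noteq>0" "bv\<noteq>0 \<or> cv\<noteq>0" "ax\<noteq>0 \<or> cx\<noteq>0" "aw\<noteq>0 \<or> cw\<noteq>0" "aw\<noteq>0 \<or> dw\<noteq>0"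
 and "av\<noteq>ax \<or> cv\<noteq>cx" "bv\<noteq>ax \<or> cv\<noteq>cx" "ax\<noteq>aw \<or> cx\<noteq>cw" "ax\<noteq>aw \<or> cx\<noteq>dw"
 and "av \<noteq> bv" "cw \<noteq> dw"
 shows False
proof -
  have cv: "cv = 1" using assms(1,2,10) by (cases cv; cases av; cases bv) auto
  have ax: "ax = 1 \<and> cx = 0" using assms(3,6,7,10) cv by (cases ax; cases cx; cases av; cases bv) auto
  have aw: "aw = 1" using assms(4,5,11) by (cases aw; cases cw; cases dw) auto
  show False using assms(8,9,11) ax aw by (cases cw; cases dw) auto
qed

section \<open>Faces of the wedge\<close>

definition full :: "('v \<times> nat) set \<Rightarrow> 'v set" where
  "full \<sigma> = {v. (v,0)\<in>\<sigma> \<or> ((v,1)\<in>\<sigma> \<and> (v,2)\<in>\<sigma>)}"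

lemma face_of_full:
  assumes down: "\<And>S T. S \<in> K \<Longrightarrow> T \<subseteq> S \<Longrightarrow> T \<in> K"
  and sub: "\<sigma> \<subseteq> wed_verts V W" and F: "full \<sigma> \<in> K"
  shows "\<sigma> \<in> wed V W K"
  unfolding wed_def
proof (intro CollectI conjI ballI sub)
  fix N assume N: "N \<in> min_nonfaces V K"
  show "\<not> wed_lift W N \<subseteq> \<sigma>"
  proof
    assume L: "wed_lift W N \<subseteq> \<sigma>"
    have "N \<subseteq> full \<sigma>"
    proof
      fix v assume "v \<in> N"
      show "v \<in> full \<sigma>"
      proof (cases "v \<in> W")
        case True then have "(v,1) \<in> wed_lift W N" "(v,2) \<in> wed_lift W N"
          using \<open>v\<in>N\<close> unfolding wed_lift_def by auto
        then show ?thesis using L unfolding full_def by auto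
      next
        case False then have "(v,0) \<in> wed_lift W N" using \<open>v\<in>N\<close> unfolding wed_lift_def by auto
        then show ?thesis using L unfolding full_def by auto
      qed
    qed
    then have "N \<in> K" using down F by blast
    then show False using N unfolding min_nonfaces_def by blast
  qed
qed

lemma full_of_face:
  assumes down: "\<And>S T. S \<in> K \<Longrightarrow> T \<subseteq> S \<Longrightarrow> T \<in> K"
  and fin: "finite V" and WV: "W \<subseteq> V" and face: "\<sigma> \<in> wed V W K"
  shows "full \<sigma> \<in> K"
proof (rule ccontr)
  assume nF: "full \<sigma> \<notin> K"
  have sub: "\<sigma> \<subseteq> wed_verts V W" using face unfolding wed_def by blast
  have fullV: "full \<sigma> \<subseteq> V"
  proof
    fix v assume "v \<in> full \<sigma>"
    then have "(v,0)\<in>\<sigma> \<or> (v,1)\<in>\<sigma>" unfolding full_def by auto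
    then show "v\<in>V" using sub WV unfolding wed_verts_def by auto
  qed
  have ex: "\<exists>N. (N \<subseteq> full \<sigma> \<and> N \<notin> K) \<and> (\<forall>N'. (N' \<subseteq> full \<sigma> \<and> N' \<notin> K) \<longrightarrow> card N \<le> card N')"
  proof (rule ex_has_least_nat[of "\<lambda>N. N \<subseteq> full \<sigma> \<and> N \<notin> K" "full \<sigma>" card])
    show "full \<sigma> \<subseteq> full \<sigma> \<and> full \<sigma> \<notin> K" using nF by blast
  qed
  then obtain N where PN: "N \<subseteq> full \<sigma> \<and> N \<notin> K"
    and minN: "\<forall>N'. (N' \<subseteq> full \<sigma> \<and> N' \<notin> K) \<longrightarrow> card N \<le> card N'"
    by blast
  have NV: "N \<subseteq> V" using PN fullV by blast
  have finN: "finite N" using finite_subset[OF NV fin] .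
  have "N \<in> min_nonfaces V K"
    unfolding min_nonfaces_def
  proof (intro CollectI conjI allI impI)
    show "N \<subseteq> V" by (rule NV)
    show "N \<notin> K" using PN by blast
    fix T assume "T \<subset> N"
    then have lt: "card T < card N" using finN psubset_card_mono by blast
    have sub': "T \<subseteq> full \<sigma>" using \<open>T \<subset> N\<close> PN by blast
    show "T \<in> K"
    proof (rule ccontr)
      assume "T \<notin> K"
      then have "card N \<le> card T" using minN sub' by blast
      with lt show False by simp
    qed
  qed
  moreover have "wed_lift W N \<subseteq> \<sigma>"
  proof
    fix z assume "z \<in> wed_lift W N"
    then consider v where "z = (v,0)" "v \<in> N" "v \<notin> W" | v k where "z = (v,k)" "v\<in>N" "v\<in>W" "k\<in>{1,2}"
      unfolding wed_lift_def by blast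
    then show "z \<in> \<sigma>"
    proof cases
      case 1
      then have "v \<in> full \<sigma>" using PN by blast
      moreover have "(v,1) \<notin> \<sigma>" using sub \<open>v\<notin>W\<close> unfolding wed_verts_def by auto
      ultimately show ?thesis using 1 unfolding full_def by auto
    next
      case 2
      then have "v \<in> full \<sigma>" using PN by blast
      moreover have "(v,0) \<notin> \<sigma>" using sub \<open>v\<in>W\<close> unfolding wed_verts_def by auto
      ultimately show ?thesis using 2 unfolding full_def by auto
    qed
  qed
  ultimately show False using face unfolding wed_def by blast
qed

lemma Pm_down: "S \<in> Pm_faces m \<Longrightarrow> T \<subseteq> S \<Longrightarrow> T \<in> Pm_faces m"
  unfolding Pm_faces_def by blast

section \<open>Independence\<close>

lemma indep4:
  fixes a b c d :: "bit^'n"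
  assumes "distinct [a,b,c,d]"
  and "\<And>k1 k2 k3 k4. k1 *s a + k2 *s b + k3 *s c + k4 *s d = 0 \<Longrightarrow> k1 = 0 \<and> k2 = 0 \<and> k3 = 0 \<and> k4 = 0"
  shows "vec.independent {a,b,c,d}"
proof
  assume "vec.dependent {a,b,c,d}"
  then obtain u where u: "\<exists>v\<in>{a,b,c,d}. u v \<noteq> 0" "(\<Sum>v\<in>{a,b,c,d}. u v *s v) = 0"
    using vec.dependent_finite[of "{a,b,c,d}"] by auto
  have "u a *s a + u b *s b + u c *s c + u d *s d = 0"
    using u(2) assms(1) by (simp add: add.assoc)
  hence "u a = 0 \<and> u b = 0 \<and> u c = 0 \<and> u d = 0" by (rule assms(2))
  then show False using u(1) by auto
qed

lemma comp_eq: "(x::bit^'n) = 0 \<Longrightarrow> x $ i = 0" by simp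

lemma indA:
  fixes x y :: "bit^4" and j1 j2 j3 j4 :: 4
  assumes dist: "distinct [j1,j2,j3,j4]"
  and nx: "x$j3 \<noteq> 0 \<or> x$j4 \<noteq> 0" and ny: "y$j3 \<noteq> 0 \<or> y$j4 \<noteq> 0"
  and nxy: "x$j3 \<noteq> y$j3 \<or> x$j4 \<noteq> y$j4"
  shows "vec.independent {axis j1 1, axis j2 1, x, y} \<and> distinct [axis j1 1, axis j2 1, x, y]"
proof
  have ax: "\<And>i j. (axis i (1::bit)) $ j = (if j = i then 1 else 0)" by (simp add: axis_def)
  have d12: "axis j1 (1::bit) \<noteq> axis j2 1"
    using dist by (auto simp: vec_eq_iff ax)
  have d1x: "axis j1 (1::bit) \<noteq> x" "axis j2 (1::bit) \<noteq> x"
    using dist nx by (auto simp: vec_eq_iff ax)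
  have d1y: "axis j1 (1::bit) \<noteq> y" "axis j2 (1::bit) \<noteq> y"
    using dist ny by (auto simp: vec_eq_iff ax)
  have dxy: "x \<noteq> y" using nxy by auto
  show D: "distinct [axis j1 1, axis j2 1, x, y]" using d12 d1x d1y dxy by auto
  show "vec.independent {axis j1 1, axis j2 1, x, y}"
  proof (rule indep4[OF D])
    fix k1 k2 k3 k4 :: bit
    assume E: "k1 *s axis j1 1 + k2 *s axis j2 1 + k3 *s x + k4 *s y = 0"
    have nq: "j1 \<noteq> j2" "j1 \<noteq> j3" "j1 \<noteq> j4" "j2 \<noteq> j3" "j2 \<noteq> j4" "j3 \<noteq> j4"
       "j2 \<noteq> j1" "j3 \<noteq> j1" "j4 \<noteq> j1" "j3 \<noteq> j2" "j4 \<noteq> j2" "j4 \<noteq> j3" using dist by auto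
    have e3: "k3 * x$j3 + k4 * y$j3 = 0" using comp_eq[OF E, of j3] nq by (simp add: ax)
    have e4: "k3 * x$j4 + k4 * y$j4 = 0" using comp_eq[OF E, of j4] nq by (simp add: ax)
    have k34: "k3 = 0 \<and> k4 = 0"
      using e3 e4 nx ny nxy by (cases k3; cases k4) auto
    have e1: "k1 + k3 * x$j1 + k4 * y$j1 = 0" using comp_eq[OF E, of j1] nq by (simp add: ax)
    have e2: "k2 + k3 * x$j2 + k4 * y$j2 = 0" using comp_eq[OF E, of j2] nq by (simp add: ax)
    show "k1 = 0 \<and> k2 = 0 \<and> k3 = 0 \<and> k4 = 0" using k34 e1 e2 by simp
  qed
qed

lemma indB:
  fixes x :: "bit^4" and j1 j2 j3 j4 :: 4
  assumes dist: "distinct [j1,j2,j3,j4]" and nx: "x$j4 \<noteq> 0"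
  shows "vec.independent {axis j1 1, axis j2 1, axis j3 1, x} \<and> distinct [axis j1 1, axis j2 1, axis j3 1, x]"
proof
  have ax: "\<And>i j. (axis i (1::bit)) $ j = (if j = i then 1 else 0)" by (simp add: axis_def)
  have dd: "axis j1 (1::bit) \<noteq> axis j2 1" "axis j1 (1::bit) \<noteq> axis j3 1" "axis j2 (1::bit) \<noteq> axis j3 1"
    using dist by (auto simp: vec_eq_iff ax)
  have dx: "axis j1 (1::bit) \<noteq> x" "axis j2 (1::bit) \<noteq> x" "axis j3 (1::bit) \<noteq> x"
    using dist nx by (auto simp: vec_eq_iff ax)
  show D: "distinct [axis j1 1, axis j2 1, axis j3 1, x]" using dd dx by auto
  show "vec.independent {axis j1 1, axis j2 1, axis j3 1, x}"
  proof (rule indep4[OF D])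
    fix k1 k2 k3 k4 :: bit
    assume E: "k1 *s axis j1 1 + k2 *s axis j2 1 + k3 *s axis j3 1 + k4 *s x = 0"
    have nq: "j1 \<noteq> j2" "j1 \<noteq> j3" "j1 \<noteq> j4" "j2 \<noteq> j3" "j2 \<noteq> j4" "j3 \<noteq> j4"
       "j2 \<noteq> j1" "j3 \<noteq> j1" "j4 \<noteq> j1" "j3 \<noteq> j2" "j4 \<noteq> j2" "j4 \<noteq> j3" using dist by auto
    have e4: "k4 * x$j4 = 0" using comp_eq[OF E, of j4] nq by (simp add: ax)
    have k4: "k4 = 0" using e4 nx by (cases k4) auto
    have e1: "k1 + k4 * x$j1 = 0" using comp_eq[OF E, of j1] nq by (simp add: ax)
    have e2: "k2 + k4 * x$j2 = 0" using comp_eq[OF E, of j2] nq by (simp add: ax)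
    have e3: "k3 + k4 * x$j3 = 0" using comp_eq[OF E, of j3] nq by (simp add: ax)
    show "k1 = 0 \<and> k2 = 0 \<and> k3 = 0 \<and> k4 = 0" using k4 e1 e2 e3 by simp
  qed
qed

lemma inj4: "f a \<noteq> f b \<Longrightarrow> f a \<noteq> f c \<Longrightarrow> f a \<noteq> f d \<Longrightarrow> f b \<noteq> f c \<Longrightarrow> f b \<noteq> f d \<Longrightarrow> f c \<noteq> f d
   \<Longrightarrow> inj_on f {a,b,c,d}"
  by simp blast




lemma adj_lemma:
  assumes adj: "p_adjacent m p l l'" and p: "p < m" and cl: "char_Pm m l" and cl': "char_Pm m l'"
    and v: "v < m"
  shows "l v = l p \<longleftrightarrow> l' v = l' p"
proof (cases "v = p")
  case True then show ?thesis by simp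
next
  case False
  from adj obtain \<Lambda> :: "nat \<times> nat \<Rightarrow> bit^3" where
    P1: "proj_equiv m \<Lambda> {(p,2)} (wid {p} (\<lambda>_. 1)) l" and
    P2: "proj_equiv m \<Lambda> {(p,1)} (wid {p} (\<lambda>_. 2)) l'"
    unfolding p_adjacent_def by blast
  from P1 obtain \<phi> :: "bit^3 \<Rightarrow> bit^2" where \<phi>l: "Vector_Spaces.linear (*s) (*s) \<phi>"
    and \<phi>k: "{x. \<phi> x = 0} = vec.span (\<Lambda> ` {(p,2)})" and \<phi>v: "\<forall>w<m. \<phi> (\<Lambda> (wid {p} (\<lambda>_. 1) w)) = l w"
    unfolding proj_equiv_def by blast
  from P2 obtain \<psi> :: "bit^3 \<Rightarrow> bit^2" where \<psi>l: "Vector_Spaces.linear (*s) (*s) \<psi>"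
    and \<psi>k: "{x. \<psi> x = 0} = vec.span (\<Lambda> ` {(p,1)})" and \<psi>v: "\<forall>w<m. \<psi> (\<Lambda> (wid {p} (\<lambda>_. 2) w)) = l' w"
    unfolding proj_equiv_def by blast
  define u1 u2 x where "u1 = \<Lambda> (p,1)" and "u2 = \<Lambda> (p,2)" and "x = \<Lambda> (v,0)"
  have \<phi>x: "\<phi> x = l v" using \<phi>v[rule_format, OF v] v False by (simp add: wid_def x_def)
  have \<phi>u1: "\<phi> u1 = l p" using \<phi>v[rule_format, OF p] p by (simp add: wid_def u1_def)
  have \<psi>x: "\<psi> x = l' v" using \<psi>v[rule_format, OF v] v False by (simp add: wid_def x_def)
  have \<psi>u2: "\<psi> u2 = l' p" using \<psi>v[rule_format, OF p] p by (simp add: wid_def u2_def)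
  have k1: "{y. \<phi> y = 0} = {0, u2}" using \<phi>k by (simp add: span1 u2_def)
  have k2: "{y. \<psi> y = 0} = {0, u1}" using \<psi>k by (simp add: span1 u1_def)
  have \<psi>u1: "\<psi> u1 = 0" using k2 by blast
  have \<phi>u2: "\<phi> u2 = 0" using k1 by blast
  have lvnz: "l v \<noteq> 0" using char_nz'[OF cl v] .
  have lvnz': "l' v \<noteq> 0" using char_nz'[OF cl' v] .
  have "l v = l p \<longleftrightarrow> \<phi> (x + u1) = 0" by (simp add: lin_add[OF \<phi>l] \<phi>x \<phi>u1 vec_add_eq0)
  also have "\<dots> \<longleftrightarrow> x + u1 \<in> {0, u2}" using k1 by blast
  also have "\<dots> \<longleftrightarrow> x = u1 \<or> x = u2 + u1" by (simp add: vec_add_eq0 vec_add_eq)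
  finally have A: "l v = l p \<longleftrightarrow> x = u1 \<or> x = u2 + u1" .
  have "l' v = l' p \<longleftrightarrow> \<psi> (x + u2) = 0" by (simp add: lin_add[OF \<psi>l] \<psi>x \<psi>u2 vec_add_eq0)
  also have "\<dots> \<longleftrightarrow> x + u2 \<in> {0, u1}" using k2 by blast
  also have "\<dots> \<longleftrightarrow> x = u2 \<or> x = u1 + u2" by (simp add: vec_add_eq0 vec_add_eq)
  finally have B: "l' v = l' p \<longleftrightarrow> x = u2 \<or> x = u1 + u2" .
  have "x \<noteq> u1" using \<psi>x \<psi>u1 lvnz' by auto
  moreover have "x \<noteq> u2" using \<phi>x \<phi>u2 lvnz by auto
  ultimately show ?thesis using A B by (simp add: add.commute)
qed

lemma bit_eq_from0: "((x::bit) = 0 \<longleftrightarrow> y = 0) \<Longrightarrow> x = y"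
  by (cases x; cases y) simp_all

lemma adj_neq: "char_Pm m l \<Longrightarrow> a < m \<Longrightarrow> b = Suc a mod m \<or> a = Suc b mod m \<Longrightarrow> b < m \<Longrightarrow> l a \<noteq> l b"
  unfolding char_Pm_def by auto

locale sq =
  fixes m p q :: nat and l1 l2 l3 :: "nat \<Rightarrow> bit^2"
  assumes m3: "m \<ge> 3" and pm: "p < m" and qm: "q < m" and pq: "p \<noteq> q"
    and c1: "char_Pm m l1" and c2: "char_Pm m l2" and c3: "char_Pm m l3"
    and l1p: "l1 p = va" and l2p: "l2 p = va" and l3p: "l3 p = va"
    and l1q: "l1 q = vb" and l2q: "l2 q = vb" and l3q: "l3 q = vb"
    and A12: "\<And>v. v < m \<Longrightarrow> l2 v $ 1 = l1 v $ 1"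
    and A13: "\<And>v. v < m \<Longrightarrow> l3 v $ 2 = l1 v $ 2"
begin

definition badv where "badv j \<longleftrightarrow> j < m \<and> j \<notin> {p,q} \<and> l2 j $ 2 = 0 \<and> l3 j $ 1 = 0"
definition bade where "bade j \<longleftrightarrow> j < m \<and> j \<notin> {p,q} \<and> Suc j mod m \<notin> {p,q} \<and>
   l2 j $ 2 = l2 (Suc j mod m) $ 2 \<and> l3 j $ 1 = l3 (Suc j mod m) $ 1"
definition Bad where "Bad \<longleftrightarrow> (\<exists>j. badv j) \<or> (\<exists>j. bade j)"

lemma m0: "0 < m" using m3 by simp

lemma vf: assumes "v < m"
  shows "l1 v $ 2 \<noteq> 0 \<or> l1 v $ 1 \<noteq> 0" "l2 v $ 2 \<noteq> 0 \<or> l1 v $ 1 \<noteq> 0" "l1 v $ 2 \<noteq> 0 \<or> l3 v $ 1 \<noteq> 0"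
  using char_nz[OF c1 assms] char_nz[OF c2 assms] char_nz[OF c3 assms] A12[OF assms] A13[OF assms]
  by auto

lemma ef: assumes "j < m" "j' = Suc j mod m"
  shows "l1 j $ 2 \<noteq> l1 j' $ 2 \<or> l1 j $ 1 \<noteq> l1 j' $ 1"
        "l2 j $ 2 \<noteq> l2 j' $ 2 \<or> l1 j $ 1 \<noteq> l1 j' $ 1"
        "l1 j $ 2 \<noteq> l1 j' $ 2 \<or> l3 j $ 1 \<noteq> l3 j' $ 1"
proof -
  have j': "j' < m" using assms m0 by simp
  show "l1 j $ 2 \<noteq> l1 j' $ 2 \<or> l1 j $ 1 \<noteq> l1 j' $ 1" using char_edge[OF c1 assms(1)] assms(2) by auto
  show "l2 j $ 2 \<noteq> l2 j' $ 2 \<or> l1 j $ 1 \<noteq> l1 j' $ 1"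
    using char_edge[OF c2 assms(1)] assms(2) A12[OF assms(1)] A12[OF j'] by auto
  show "l1 j $ 2 \<noteq> l1 j' $ 2 \<or> l3 j $ 1 \<noteq> l3 j' $ 1"
    using char_edge[OF c3 assms(1)] assms(2) A13[OF assms(1)] A13[OF j'] by auto
qed

lemma ef': assumes "a < m" "b < m" "b = Suc a mod m \<or> a = Suc b mod m"
  shows "(l1 a $ 2 \<noteq> l1 b $ 2 \<or> l1 a $ 1 \<noteq> l1 b $ 1) \<and>
        (l2 a $ 2 \<noteq> l2 b $ 2 \<or> l1 a $ 1 \<noteq> l1 b $ 1) \<and>
        (l1 a $ 2 \<noteq> l1 b $ 2 \<or> l3 a $ 1 \<noteq> l3 b $ 1)"
proof -
  consider "b = Suc a mod m" | "a = Suc b mod m" using assms(3) by blast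
  then show ?thesis
  proof cases
    case 1 show ?thesis using ef[OF assms(1) 1] by auto
  next
    case 2 show ?thesis using ef[OF assms(2) 2] by auto
  qed
qed

lemma D12: "sdiff_maps m l1 l2 = {v. v < m \<and> l1 v $ 2 \<noteq> l2 v $ 2}"
  unfolding sdiff_maps_def using A12 by (auto simp: vec2_eq)

lemma D13: "sdiff_maps m l1 l3 = {v. v < m \<and> l1 v $ 1 \<noteq> l3 v $ 1}"
  unfolding sdiff_maps_def using A13 by (auto simp: vec2_eq)

lemma pq_notD: "p \<notin> sdiff_maps m l1 l2" "q \<notin> sdiff_maps m l1 l2" "p \<notin> sdiff_maps m l1 l3" "q \<notin> sdiff_maps m l1 l3"
  unfolding D12 D13 by (simp_all add: l1p l2p l3p l1q l2q l3q)

lemma Dsub: "sdiff_maps m l1 l2 \<subseteq> {..<m}" "sdiff_maps m l1 l3 \<subseteq> {..<m}"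
  unfolding sdiff_maps_def by auto

lemma cond2_alt: "nbhd m (sdiff_maps m l1 l2) \<inter> sdiff_maps m l1 l3 = {} \<longleftrightarrow>
  \<not> (\<exists>v\<in>sdiff_maps m l1 l2. \<exists>w\<in>sdiff_maps m l1 l3. w = v \<or> w = Suc v mod m \<or> v = Suc w mod m)"
proof -
  have "\<And>w. w \<in> sdiff_maps m l1 l3 \<Longrightarrow> w \<in> nbhd m (sdiff_maps m l1 l2) \<longleftrightarrow>
     (\<exists>v\<in>sdiff_maps m l1 l2. w = v \<or> w = Suc v mod m \<or> v = Suc w mod m)"
    using nbhd_mem[OF m0 _ Dsub(1)] Dsub(2) by blast
  then show ?thesis by blast
qed

lemma cond2_iff: "nbhd m (sdiff_maps m l1 l2) \<inter> sdiff_maps m l1 l3 = {} \<longleftrightarrow> \<not> Bad"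
proof -
  let ?D12 = "sdiff_maps m l1 l2" and ?D13 = "sdiff_maps m l1 l3"
  have "(\<exists>v\<in>?D12. \<exists>w\<in>?D13. w = v \<or> w = Suc v mod m \<or> v = Suc w mod m) \<longleftrightarrow> Bad"
  proof
    assume "\<exists>v\<in>?D12. \<exists>w\<in>?D13. w = v \<or> w = Suc v mod m \<or> v = Suc w mod m"
    then obtain v w where v: "v \<in> ?D12" and w: "w \<in> ?D13" and r: "w = v \<or> w = Suc v mod m \<or> v = Suc w mod m"
      by blast
    have vm: "v < m" and wm: "w < m" using v w unfolding sdiff_maps_def by auto
    have vpq: "v \<notin> {p,q}" using v pq_notD by auto
    have wpq: "w \<notin> {p,q}" using w pq_notD by auto
    have vD: "l1 v $ 2 \<noteq> l2 v $ 2" using v unfolding D12 by auto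
    have wD: "l1 w $ 1 \<noteq> l3 w $ 1" using w unfolding D13 by auto
    from r consider "w = v" | "w = Suc v mod m" | "v = Suc w mod m" by blast
    then show Bad
    proof cases
      case 1
      have "l2 v $ 2 = 0 \<and> l3 v $ 1 = 0" using bV[OF vf[OF vm]] vD wD 1 by blast
      then have "badv v" unfolding badv_def using vm vpq by blast
      then show Bad unfolding Bad_def by blast
    next
      case 2
      have "(l2 v $ 2 = l2 w $ 2 \<and> l3 v $ 1 = l3 w $ 1) \<or> (l2 v $ 2 = 0 \<and> l3 v $ 1 = 0) \<or> (l2 w $ 2 = 0 \<and> l3 w $ 1 = 0)"
        using bE2[OF vf[OF vm] vf[OF wm] ef[OF vm 2]] vD wD by blast
      then show Bad unfolding Bad_def badv_def bade_def using vm wm vpq wpq 2 by blast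
    next
      case 3
      have "(l2 w $ 2 = l2 v $ 2 \<and> l3 w $ 1 = l3 v $ 1) \<or> (l2 w $ 2 = 0 \<and> l3 w $ 1 = 0) \<or> (l2 v $ 2 = 0 \<and> l3 v $ 1 = 0)"
        using bE2[OF vf[OF wm] vf[OF vm] ef[OF wm 3]] vD wD by blast
      then show Bad unfolding Bad_def badv_def bade_def using vm wm vpq wpq 3 by blast
    qed
  next
    assume Bad
    then consider j where "badv j" | j where "bade j" unfolding Bad_def by blast
    then show "\<exists>v\<in>?D12. \<exists>w\<in>?D13. w = v \<or> w = Suc v mod m \<or> v = Suc w mod m"
    proof cases
      case 1
      then have jm: "j < m" and b: "l2 j $ 2 = 0 \<and> l3 j $ 1 = 0" unfolding badv_def by auto
      have "l1 j $ 2 \<noteq> l2 j $ 2 \<and> l1 j $ 1 \<noteq> l3 j $ 1" using bV[OF vf[OF jm]] b by blast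
      then have "j \<in> ?D12" "j \<in> ?D13" unfolding D12 D13 using jm by auto
      then show ?thesis by blast
    next
      case 2
      define j' where "j' = Suc j mod m"
      have jm: "j < m" and b: "l2 j $ 2 = l2 j' $ 2" "l3 j $ 1 = l3 j' $ 1"
        using 2 unfolding bade_def j'_def by auto
      have jm': "j' < m" using m0 unfolding j'_def by simp
      have "(l1 j $ 2 \<noteq> l2 j $ 2 \<and> l1 j' $ 1 \<noteq> l3 j' $ 1) \<or> (l1 j' $ 2 \<noteq> l2 j' $ 2 \<and> l1 j $ 1 \<noteq> l3 j $ 1)"
        using bE1[OF vf[OF jm] vf[OF jm'] ef[OF jm j'_def] b] .
      then show ?thesis
      proof
        assume "l1 j $ 2 \<noteq> l2 j $ 2 \<and> l1 j' $ 1 \<noteq> l3 j' $ 1"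
        then have "j \<in> ?D12" "j' \<in> ?D13" unfolding D12 D13 using jm jm' by auto
        then show ?thesis unfolding j'_def by blast
      next
        assume "l1 j' $ 2 \<noteq> l2 j' $ 2 \<and> l1 j $ 1 \<noteq> l3 j $ 1"
        then have "j' \<in> ?D12" "j \<in> ?D13" unfolding D12 D13 using jm jm' by auto
        then show ?thesis unfolding j'_def by blast
      qed
    qed
  qed
  then show ?thesis using cond2_alt by blast
qed

lemma cond23: "nbhd m (sdiff_maps m l1 l2) \<inter> sdiff_maps m l1 l3 = {} \<longleftrightarrow>
   nbhd m (sdiff_maps m l1 l2) \<inter> nbhd m (sdiff_maps m l1 l3) = {}"
proof
  assume "nbhd m (sdiff_maps m l1 l2) \<inter> nbhd m (sdiff_maps m l1 l3) = {}"
  then show "nbhd m (sdiff_maps m l1 l2) \<inter> sdiff_maps m l1 l3 = {}"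
    using nbhd_self[OF m0, of "sdiff_maps m l1 l3"] by blast
next
  let ?D12 = "sdiff_maps m l1 l2" and ?D13 = "sdiff_maps m l1 l3"
  let ?R = "\<lambda>a b. b = Suc a mod m \<or> a = Suc b mod m"
  assume H: "nbhd m ?D12 \<inter> ?D13 = {}"
  then have H': "\<And>v w. v \<in> ?D12 \<Longrightarrow> w \<in> ?D13 \<Longrightarrow> w \<noteq> v \<and> \<not> ?R v w"
    using cond2_alt by blast
  show "nbhd m ?D12 \<inter> nbhd m ?D13 = {}"
  proof (rule ccontr)
    assume "nbhd m ?D12 \<inter> nbhd m ?D13 \<noteq> {}"
    then obtain x where x1: "x \<in> nbhd m ?D12" and x2: "x \<in> nbhd m ?D13" by blast
    have xm: "x < m" using x1 nbhd_sub[OF m0 Dsub(1)] by auto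
    obtain v where v: "v \<in> ?D12" and rv: "x = v \<or> ?R v x"
      using x1 nbhd_mem[OF m0 xm Dsub(1)] by blast
    obtain w where w: "w \<in> ?D13" and rw: "x = w \<or> ?R w x"
      using x2 nbhd_mem[OF m0 xm Dsub(2)] by blast
    have vm: "v < m" and wm: "w < m" using v w unfolding sdiff_maps_def by auto
    have xv: "x \<noteq> v"
    proof
      assume "x = v" then show False using H'[OF v w] rw by blast
    qed
    have xw: "x \<noteq> w"
    proof
      assume "x = w" then show False using H'[OF v w] rv by blast
    qed
    have Rvx: "?R v x" using rv xv by blast
    have Rxw: "?R x w" using rw xw by blast
    have xn12: "x \<notin> ?D12" using H' w Rxw by blast
    have xn13: "x \<notin> ?D13" using H' v Rvx by blast
    have vn13: "v \<notin> ?D13" using H' v by blast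
    have wn12: "w \<notin> ?D12" using H' w by blast
    have e1: "l2 x $ 2 = l1 x $ 2" "l3 x $ 1 = l1 x $ 1" "l3 v $ 1 = l1 v $ 1" "l2 w $ 2 = l1 w $ 2"
      using xn12 xn13 vn13 wn12 xm vm wm unfolding D12 D13 by auto
    have vD: "l1 v $ 2 \<noteq> l2 v $ 2" using v unfolding D12 by auto
    have wD: "l1 w $ 1 \<noteq> l3 w $ 1" using w unfolding D13 by auto
    note evx = ef'[OF vm xm Rvx]
    note exw = ef'[OF xm wm Rxw]
    show False
      using bPath[of "l1 v $ 2" "l1 v $ 1" "l2 v $ 2" "l1 x $ 2" "l1 x $ 1" "l1 w $ 2" "l1 w $ 1" "l3 w $ 1"]
        vf[OF vm] vf[OF xm] vf[OF wm] evx exw e1 vD wD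
      by auto
  qed
qed

end



definition pig :: "4 \<Rightarrow> 4 \<Rightarrow> bit^4 \<Rightarrow> bit^2" where
  "pig a b x = (\<chi> i. if i = 1 then x $ b else x $ a)"

lemma pig_apply [simp]: "pig a b x $ 1 = x $ b" "pig a b x $ 2 = x $ a"
  by (simp_all add: pig_def)

lemma pig_lin: "Vector_Spaces.linear (*s) (*s) (pig a b)"
  by (rule lin_I) (simp_all add: vec2_eq)

lemma axis_comp: "(axis i (1::bit)) $ j = (if j = i then 1 else 0)"
  by (simp add: axis_def)

lemma pig_surj: assumes "a \<noteq> b" shows "surj (pig a b)"
proof -
  have "\<And>y. y = pig a b (y$2 *s axis a 1 + y$1 *s axis b 1)"
    using assms by (simp add: vec2_eq axis_comp)
  then show ?thesis unfolding surj_def by blast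
qed

lemma pig_ker:
  assumes d: "distinct [a,b,c,d]" and all: "\<And>i. i = a \<or> i = b \<or> i = c \<or> i = d"
  shows "{x. pig a b x = 0} = vec.span {axis c 1, axis d 1}"
proof -
  have nq: "a \<noteq> b" "a \<noteq> c" "a \<noteq> d" "b \<noteq> c" "b \<noteq> d" "c \<noteq> d"
       "b \<noteq> a" "c \<noteq> a" "d \<noteq> a" "c \<noteq> b" "d \<noteq> b" "d \<noteq> c" using d by auto
  have "pig a b x = 0 \<longleftrightarrow> (\<exists>s t. x = s *s axis c 1 + t *s axis d 1)" for x
  proof
    assume "pig a b x = 0"
    then have z: "x $ a = 0" "x $ b = 0" by (simp_all add: vec2_eq)
    have "x = x$c *s axis c 1 + x$d *s axis d 1"
      unfolding vec_eq_iff
    proof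
      fix i
      show "x $ i = (x$c *s axis c 1 + x$d *s axis d 1) $ i"
        using all[of i] z nq by (auto simp: axis_comp)
    qed
    then show "\<exists>s t. x = s *s axis c 1 + t *s axis d 1" by blast
  next
    assume "\<exists>s t. x = s *s axis c 1 + t *s axis d 1"
    then obtain s t where "x = s *s axis c 1 + t *s axis d 1" by blast
    then show "pig a b x = 0" using nq by (simp add: vec2_eq axis_comp)
  qed
  then show ?thesis unfolding span2 by blast
qed

lemma good_of:
  assumes "vec.independent {A,B,C,D} \<and> distinct [A,B,C,D]"
    and "f a = A" "f b = B" "f c = C" "f d = D"
  shows "inj_on f {a,b,c,d} \<and> vec.independent (f ` {a,b,c,d})"
proof
  show "vec.independent (f ` {a,b,c,d})" using assms by simp
  show "inj_on f {a,b,c,d}" by (rule inj4) (use assms in auto)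
qed

lemma inj_neq: "inj_on f A \<Longrightarrow> a \<in> A \<Longrightarrow> b \<in> A \<Longrightarrow> a \<noteq> b \<Longrightarrow> f a \<noteq> f b"
  by (auto dest: inj_onD)

lemma dep_lemma: "a \<in> S \<Longrightarrow> a \<in> vec.span (S - {a}) \<Longrightarrow> vec.dependent S"
  unfolding vec.dependent_def by blast

context sq begin

lemma suc_neq: "j < m \<Longrightarrow> Suc j mod m \<noteq> j"
  using m3 by (cases "Suc j = m") auto

abbreviation "Wd \<equiv> wed {0..<m} {p, q} (Pm_faces m)"

lemma edge_face: "i < m \<Longrightarrow> {i, Suc i mod m} \<in> Pm_faces m"
  unfolding Pm_faces_def by blast

lemma face_small:
  assumes "\<sigma> \<subseteq> wed_verts {0..<m} {p,q}" "full \<sigma> \<subseteq> {i, Suc i mod m}" "i < m"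
  shows "\<sigma> \<in> Wd"
proof (rule face_of_full[where K = "Pm_faces m"])
  show "\<And>S T. S \<in> Pm_faces m \<Longrightarrow> T \<subseteq> S \<Longrightarrow> T \<in> Pm_faces m" by (rule Pm_down)
  show "\<sigma> \<subseteq> wed_verts {0..<m} {p,q}" by (rule assms(1))
  show "full \<sigma> \<in> Pm_faces m" by (rule Pm_down[OF edge_face[OF assms(3)] assms(2)])
qed

lemma face3: assumes "j < m" "j \<notin> {p,q}" shows "{(p,1),(q,1),(j,0)} \<in> Wd"
proof (rule face_small[of _ j])
  show "{(p,1),(q,1),(j,0)} \<subseteq> wed_verts {0..<m} {p,q}"
    using assms pm qm unfolding wed_verts_def by auto
  show "full {(p,1),(q,1),(j,0)} \<subseteq> {j, Suc j mod m}"
    unfolding full_def by auto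
qed (rule assms(1))

lemma face4: assumes "j < m" "j \<notin> {p,q}" "Suc j mod m \<notin> {p,q}"
  shows "{(p,1),(q,1),(j,0),(Suc j mod m,0)} \<in> Wd"
proof (rule face_small[of _ j])
  have "Suc j mod m < m" using m3 by simp
  then show "{(p,1),(q,1),(j,0),(Suc j mod m,0)} \<subseteq> wed_verts {0..<m} {p,q}"
    using assms pm qm unfolding wed_verts_def by auto
  show "full {(p,1),(q,1),(j,0),(Suc j mod m,0)} \<subseteq> {j, Suc j mod m}"
    unfolding full_def by auto
qed (rule assms(1))

lemma L1:
  assumes "\<exists>\<Lambda> :: nat \<times> nat \<Rightarrow> bit^4.
             char_map (wed {0..<m} {p, q} (Pm_faces m)) \<Lambda> \<and>
             proj_equiv m \<Lambda> {(p, 2), (q, 2)} (wid {p, q} (\<lambda>_. 1)) l1 \<and>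
             proj_equiv m \<Lambda> {(p, 1), (q, 2)} (wid {p, q} (\<lambda>v. if v = p then 2 else 1)) l2 \<and>
             proj_equiv m \<Lambda> {(p, 2), (q, 1)} (wid {p, q} (\<lambda>v. if v = p then 1 else 2)) l3"
  shows "\<not> Bad"
proof
  assume B: Bad
  from assms obtain \<Lambda> :: "nat \<times> nat \<Rightarrow> bit^4" where
    CM: "char_map Wd \<Lambda>" and
    P1: "proj_equiv m \<Lambda> {(p, 2), (q, 2)} (wid {p, q} (\<lambda>_. 1)) l1" and
    P2: "proj_equiv m \<Lambda> {(p, 1), (q, 2)} (wid {p, q} (\<lambda>v. if v = p then 2 else 1)) l2" and
    P3: "proj_equiv m \<Lambda> {(p, 2), (q, 1)} (wid {p, q} (\<lambda>v. if v = p then 1 else 2)) l3"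
    by blast
  from P1 obtain \<phi>1 :: "bit^4 \<Rightarrow> bit^2" where l1: "Vector_Spaces.linear (*s) (*s) \<phi>1"
    and k1: "{x. \<phi>1 x = 0} = vec.span (\<Lambda> ` {(p, 2), (q, 2)})"
    and v1: "\<forall>w<m. \<phi>1 (\<Lambda> (wid {p, q} (\<lambda>_. 1) w)) = l1 w"
    unfolding proj_equiv_def by blast
  from P2 obtain \<phi>2 :: "bit^4 \<Rightarrow> bit^2" where l2: "Vector_Spaces.linear (*s) (*s) \<phi>2"
    and k2: "{x. \<phi>2 x = 0} = vec.span (\<Lambda> ` {(p, 1), (q, 2)})"
    and v2: "\<forall>w<m. \<phi>2 (\<Lambda> (wid {p, q} (\<lambda>v. if v = p then 2 else 1) w)) = l2 w"
    unfolding proj_equiv_def by blast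
  from P3 obtain \<phi>3 :: "bit^4 \<Rightarrow> bit^2" where l3: "Vector_Spaces.linear (*s) (*s) \<phi>3"
    and k3: "{x. \<phi>3 x = 0} = vec.span (\<Lambda> ` {(p, 2), (q, 1)})"
    and v3: "\<forall>w<m. \<phi>3 (\<Lambda> (wid {p, q} (\<lambda>v. if v = p then 1 else 2) w)) = l3 w"
    unfolding proj_equiv_def by blast
  have qp: "q \<noteq> p" using pq by blast
  have f1: "\<phi>1 (\<Lambda> (p,1)) = va" "\<phi>1 (\<Lambda> (q,1)) = vb" "\<phi>1 (\<Lambda> (p,2)) = 0" "\<phi>1 (\<Lambda> (q,2)) = 0"
    using v1[rule_format, OF pm] v1[rule_format, OF qm] kernel_zero[OF k1] qp
    by (auto simp: wid_def l1p l1q)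
  have f2: "\<phi>2 (\<Lambda> (p,2)) = va" "\<phi>2 (\<Lambda> (q,1)) = vb" "\<phi>2 (\<Lambda> (p,1)) = 0" "\<phi>2 (\<Lambda> (q,2)) = 0"
    using v2[rule_format, OF pm] v2[rule_format, OF qm] kernel_zero[OF k2] qp
    by (auto simp: wid_def l2p l2q)
  have f3: "\<phi>3 (\<Lambda> (p,1)) = va" "\<phi>3 (\<Lambda> (q,2)) = vb" "\<phi>3 (\<Lambda> (p,2)) = 0" "\<phi>3 (\<Lambda> (q,1)) = 0"
    using v3[rule_format, OF pm] v3[rule_format, OF qm] kernel_zero[OF k3] qp
    by (auto simp: wid_def l3p l3q)
  have dec: "\<Lambda> (v,0) = l1 v $ 2 *s \<Lambda> (p,1) + l2 v $ 2 *s \<Lambda> (p,2) + l1 v $ 1 *s \<Lambda> (q,1) + l3 v $ 1 *s \<Lambda> (q,2)"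
    if vm: "v < m" and vpq: "v \<notin> {p,q}" for v
  proof -
    define x where "x = \<Lambda> (v,0)"
    have wv: "\<And>f. wid {p,q} f v = (v,0)" using vpq by (simp add: wid_def)
    have x1: "\<phi>1 x = l1 v" using v1[rule_format, OF vm] by (simp add: wv x_def)
    have x2: "\<phi>2 x = l2 v" using v2[rule_format, OF vm] by (simp add: wv x_def)
    have x3: "\<phi>3 x = l3 v" using v3[rule_format, OF vm] by (simp add: wv x_def)
    have dd: "l1 v $ 2 *s va + l1 v $ 1 *s vb = l1 v" by (simp add: vec2_eq)
    have "\<phi>1 (x + (l1 v $ 2 *s \<Lambda> (p,1) + l1 v $ 1 *s \<Lambda> (q,1))) = 0"
      using f1 by (simp add: lin_add[OF l1] lin_scale[OF l1] x1 dd)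
    then have "x + (l1 v $ 2 *s \<Lambda> (p,1) + l1 v $ 1 *s \<Lambda> (q,1)) \<in> vec.span {\<Lambda> (p,2), \<Lambda> (q,2)}"
      using k1 by auto
    then obtain s t where st: "x + (l1 v $ 2 *s \<Lambda> (p,1) + l1 v $ 1 *s \<Lambda> (q,1)) = s *s \<Lambda> (p,2) + t *s \<Lambda> (q,2)"
      unfolding span2 by blast
    then have xe: "x = s *s \<Lambda> (p,2) + t *s \<Lambda> (q,2) + (l1 v $ 2 *s \<Lambda> (p,1) + l1 v $ 1 *s \<Lambda> (q,1))"
      by (simp add: vec_add_eq)
    have "l2 v = s *s va + l1 v $ 1 *s vb"
      using x2 f2 by (simp add: xe lin_add[OF l2] lin_scale[OF l2] add_ac)
    then have s: "s = l2 v $ 2" by simp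
    have "l3 v = t *s vb + l1 v $ 2 *s va"
      using x3 f3 by (simp add: xe lin_add[OF l3] lin_scale[OF l3] add_ac)
    then have t: "t = l3 v $ 1" by simp
    show ?thesis using xe s t unfolding x_def by (simp add: add_ac)
  qed
  from B consider j where "badv j" | j where "bade j" unfolding Bad_def by blast
  then show False
  proof cases
    case 1
    then have jm: "j < m" and jpq: "j \<notin> {p,q}" and b: "l2 j $ 2 = 0" "l3 j $ 1 = 0"
      unfolding badv_def by auto
    have a: "l1 j $ 2 = 1" "l1 j $ 1 = 1" using vf[OF jm] b by auto
    have xj: "\<Lambda> (j,0) = \<Lambda> (p,1) + \<Lambda> (q,1)" using dec[OF jm jpq] a b by simp
    have F: "{(p,1),(q,1),(j,0)} \<in> Wd" by (rule face3[OF jm jpq])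
    have inj: "inj_on \<Lambda> {(p,1),(q,1),(j,0)}" and ind: "vec.independent (\<Lambda> ` {(p,1),(q,1),(j,0)})"
      using CM F unfolding char_map_def by auto
    have n1: "\<Lambda> (j,0) \<noteq> \<Lambda> (p,1)" by (rule inj_neq[OF inj]) auto
    have n2: "\<Lambda> (j,0) \<noteq> \<Lambda> (q,1)" by (rule inj_neq[OF inj]) auto
    let ?S = "\<Lambda> ` {(p,1),(q,1),(j,0)}"
    have "\<Lambda> (p,1) \<in> ?S - {\<Lambda> (j,0)}" "\<Lambda> (q,1) \<in> ?S - {\<Lambda> (j,0)}" using n1 n2 by auto
    then have "\<Lambda> (p,1) + \<Lambda> (q,1) \<in> vec.span (?S - {\<Lambda> (j,0)})"
      by (intro vec.span_add vec.span_base)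
    then have "vec.dependent ?S" using xj by (intro dep_lemma[of "\<Lambda> (j,0)"]) auto
    then show False using ind by blast
  next
    case 2
    define j' where "j' = Suc j mod m"
    have jm: "j < m" and jpq: "j \<notin> {p,q}" and jpq': "j' \<notin> {p,q}"
      and b: "l2 j $ 2 = l2 j' $ 2" "l3 j $ 1 = l3 j' $ 1"
      using 2 unfolding bade_def j'_def by auto
    have jm': "j' < m" using m3 unfolding j'_def by simp
    have jj: "j' \<noteq> j" using suc_neq[OF jm] unfolding j'_def .
    have F: "{(p,1),(q,1),(j,0),(j',0)} \<in> Wd" unfolding j'_def
      by (rule face4[OF jm jpq]) (use jpq' j'_def in simp)
    have inj: "inj_on \<Lambda> {(p,1),(q,1),(j,0),(j',0)}" and ind: "vec.independent (\<Lambda> ` {(p,1),(q,1),(j,0),(j',0)})"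
      using CM F unfolding char_map_def by auto
    have n1: "\<Lambda> (j,0) \<noteq> \<Lambda> (p,1)" by (rule inj_neq[OF inj]) auto
    have n2: "\<Lambda> (j,0) \<noteq> \<Lambda> (q,1)" by (rule inj_neq[OF inj]) auto
    have n3: "\<Lambda> (j,0) \<noteq> \<Lambda> (j',0)" by (rule inj_neq[OF inj]) (use jj in auto)
    have xj: "\<Lambda> (j,0) = \<Lambda> (j',0) + ((l1 j $ 2 - l1 j' $ 2) *s \<Lambda> (p,1) + (l1 j $ 1 - l1 j' $ 1) *s \<Lambda> (q,1))"
    proof -
      have e1: "\<Lambda> (j,0) = l1 j $ 2 *s \<Lambda> (p,1) + l2 j' $ 2 *s \<Lambda> (p,2) + l1 j $ 1 *s \<Lambda> (q,1) + l3 j' $ 1 *s \<Lambda> (q,2)"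
        using dec[OF jm jpq] b by simp
      have e2: "\<Lambda> (j',0) = l1 j' $ 2 *s \<Lambda> (p,1) + l2 j' $ 2 *s \<Lambda> (p,2) + l1 j' $ 1 *s \<Lambda> (q,1) + l3 j' $ 1 *s \<Lambda> (q,2)"
        using dec[OF jm' jpq'] .
      show ?thesis unfolding e1 e2 vec.scale_left_diff_distrib by (simp add: algebra_simps)
    qed
    let ?S = "\<Lambda> ` {(p,1),(q,1),(j,0),(j',0)}"
    have m1: "\<Lambda> (p,1) \<in> ?S - {\<Lambda> (j,0)}" "\<Lambda> (q,1) \<in> ?S - {\<Lambda> (j,0)}" "\<Lambda> (j',0) \<in> ?S - {\<Lambda> (j,0)}"
      using n1 n2 n3 by auto
    have "\<Lambda> (j',0) + ((l1 j $ 2 - l1 j' $ 2) *s \<Lambda> (p,1) + (l1 j $ 1 - l1 j' $ 1) *s \<Lambda> (q,1))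
       \<in> vec.span (?S - {\<Lambda> (j,0)})"
      using m1 by (intro vec.span_add vec.span_scale vec.span_base)
    then have "vec.dependent ?S" using xj by (intro dep_lemma[of "\<Lambda> (j,0)"]) auto
    then show False using ind by blast
  qed
qed

end



context sq begin

definition X :: "nat \<Rightarrow> bit^4" where
  "X v = (\<chi> i. if i = 1 then l1 v $ 2 else if i = 2 then l2 v $ 2 else if i = 3 then l1 v $ 1 else l3 v $ 1)"

lemma X_simps [simp]: "X v $ 1 = l1 v $ 2" "X v $ 2 = l2 v $ 2" "X v $ 3 = l1 v $ 1" "X v $ 4 = l3 v $ 1"
  by (simp_all add: X_def)

definition Lc :: "nat \<times> nat \<Rightarrow> bit^4" where
  "Lc z = (if fst z = p then (if snd z = 1 then axis 1 1 else axis 2 1)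
           else if fst z = q then (if snd z = 1 then axis 3 1 else axis 4 1) else X (fst z))"

lemma Lc_simps: "Lc (p,1) = axis 1 1" "Lc (p,2) = axis 2 1" "Lc (q,1) = axis 3 1" "Lc (q,2) = axis 4 1"
  "Lc (p,Suc 0) = axis 1 1" "Lc (q,Suc 0) = axis 3 1"
  "v \<noteq> p \<Longrightarrow> v \<noteq> q \<Longrightarrow> Lc (v,k) = X v"
  using pq by (simp_all add: Lc_def)

lemma Lc_X: "v \<noteq> p \<Longrightarrow> v \<noteq> q \<Longrightarrow> Lc (v,k) = X v"
  by (simp add: Lc_def)

definition good where "good T \<longleftrightarrow> inj_on Lc T \<and> vec.independent (Lc ` T)"

lemma adj_nz: assumes "i < m" "i \<noteq> p" "p = Suc i mod m \<or> i = Suc p mod m"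
  shows "l1 i $ 1 \<noteq> 0" "l3 i $ 1 \<noteq> 0"
proof -
  have "l1 i \<noteq> l1 p" by (rule adj_neq[OF c1 assms(1)]) (use assms pm in auto)
  then show "l1 i $ 1 \<noteq> 0" using is_va[OF c1 assms(1)] l1p by auto
  have "l3 i \<noteq> l3 p" by (rule adj_neq[OF c3 assms(1)]) (use assms pm in auto)
  then show "l3 i $ 1 \<noteq> 0" using is_va[OF c3 assms(1)] l3p by auto
qed

lemma adj_nz_q: assumes "i < m" "i \<noteq> q" "q = Suc i mod m \<or> i = Suc q mod m"
  shows "l1 i $ 2 \<noteq> 0" "l2 i $ 2 \<noteq> 0"
proof -
  have "l1 i \<noteq> l1 q" by (rule adj_neq[OF c1 assms(1)]) (use assms qm in auto)
  then show "l1 i $ 2 \<noteq> 0" using is_vb[OF c1 assms(1)] l1q by auto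
  have "l2 i \<noteq> l2 q" by (rule adj_neq[OF c2 assms(1)]) (use assms qm in auto)
  then show "l2 i $ 2 \<noteq> 0" using is_vb[OF c2 assms(1)] l2q by auto
qed

lemma goodA:
  assumes nb: "\<not> Bad" and im: "i < m" and ipq: "i \<notin> {p,q}" and ipq': "Suc i mod m \<notin> {p,q}"
    and kp: "kp \<in> {1,2}" and kq: "kq \<in> {1,2}"
  shows "good {(p,kp),(q,kq),(i,0),(Suc i mod m,0)}"
proof -
  define i' where "i' = Suc i mod m"
  have im': "i' < m" using m3 unfolding i'_def by simp
  have ipq'': "i' \<notin> {p,q}" using ipq' unfolding i'_def .
  have b1: "l2 i $ 2 \<noteq> 0 \<or> l3 i $ 1 \<noteq> 0" using nb im ipq unfolding Bad_def badv_def by auto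
  have b2: "l2 i' $ 2 \<noteq> 0 \<or> l3 i' $ 1 \<noteq> 0" using nb im' ipq'' unfolding Bad_def badv_def by auto
  have b3: "l2 i $ 2 \<noteq> l2 i' $ 2 \<or> l3 i $ 1 \<noteq> l3 i' $ 1"
    using nb im ipq ipq' unfolding Bad_def bade_def i'_def by auto
  note e = ef[OF im i'_def]
  have LX: "Lc (i,0) = X i" "Lc (i',0) = X i'"
    by (rule Lc_X; use ipq ipq'' in auto)+
  from kp kq consider "kp = 1" "kq = 1" | "kp = 1" "kq = 2" | "kp = 2" "kq = 1" | "kp = 2" "kq = 2" by blast
  then have "good {(p,kp),(q,kq),(i,0),(i',0)}"
  proof cases
    case 1
    have I: "vec.independent {axis 1 1, axis 3 1, X i, X i'} \<and> distinct [axis 1 1, axis 3 1, X i, X i']"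
      by (rule indA[of 1 3 2 4]) (use b1 b2 b3 in simp_all)
    show ?thesis unfolding good_def 1 by (rule good_of[OF I]) (simp_all add: Lc_simps LX)
  next
    case 2
    have I: "vec.independent {axis 1 1, axis 4 1, X i, X i'} \<and> distinct [axis 1 1, axis 4 1, X i, X i']"
      by (rule indA[of 1 4 2 3]) (use vf[OF im] vf[OF im'] e in simp_all)
    show ?thesis unfolding good_def 2 by (rule good_of[OF I]) (simp_all add: Lc_simps LX)
  next
    case 3
    have I: "vec.independent {axis 2 1, axis 3 1, X i, X i'} \<and> distinct [axis 2 1, axis 3 1, X i, X i']"
      by (rule indA[of 2 3 1 4]) (use vf[OF im] vf[OF im'] e in simp_all)
    show ?thesis unfolding good_def 3 by (rule good_of[OF I]) (simp_all add: Lc_simps LX)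
  next
    case 4
    have I: "vec.independent {axis 2 1, axis 4 1, X i, X i'} \<and> distinct [axis 2 1, axis 4 1, X i, X i']"
      by (rule indA[of 2 4 1 3]) (use vf[OF im] vf[OF im'] e in simp_all)
    show ?thesis unfolding good_def 4 by (rule good_of[OF I]) (simp_all add: Lc_simps LX)
  qed
  then show ?thesis unfolding i'_def .
qed

lemma goodB:
  assumes im: "i < m" and ipq: "i \<notin> {p,q}" and adj: "p = Suc i mod m \<or> i = Suc p mod m"
    and kq: "kq \<in> {1,2}"
  shows "good {(p,1),(p,2),(q,kq),(i,0)}"
proof -
  have n: "l1 i $ 1 \<noteq> 0" "l3 i $ 1 \<noteq> 0" using adj_nz[OF im _ adj] ipq by auto
  have LX: "Lc (i,0) = X i" using ipq by (simp add: Lc_X)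
  from kq consider "kq = 1" | "kq = 2" by blast
  then show ?thesis
  proof cases
    case 1
    have I: "vec.independent {axis 1 1, axis 2 1, axis 3 1, X i} \<and> distinct [axis 1 1, axis 2 1, axis 3 1, X i]"
      by (rule indB[of 1 2 3 4]) (use n in simp_all)
    show ?thesis unfolding good_def 1 by (rule good_of[OF I]) (simp_all add: Lc_simps LX)
  next
    case 2
    have I: "vec.independent {axis 1 1, axis 2 1, axis 4 1, X i} \<and> distinct [axis 1 1, axis 2 1, axis 4 1, X i]"
      by (rule indB[of 1 2 4 3]) (use n in simp_all)
    show ?thesis unfolding good_def 2 by (rule good_of[OF I]) (simp_all add: Lc_simps LX)
  qed
qed

lemma goodC:
  assumes im: "i < m" and ipq: "i \<notin> {p,q}" and adj: "q = Suc i mod m \<or> i = Suc q mod m"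
    and kp: "kp \<in> {1,2}"
  shows "good {(q,1),(q,2),(p,kp),(i,0)}"
proof -
  have n: "l1 i $ 2 \<noteq> 0" "l2 i $ 2 \<noteq> 0" using adj_nz_q[OF im _ adj] ipq by auto
  have LX: "Lc (i,0) = X i" using ipq by (simp add: Lc_X)
  from kp consider "kp = 1" | "kp = 2" by blast
  then show ?thesis
  proof cases
    case 1
    have I: "vec.independent {axis 3 1, axis 4 1, axis 1 1, X i} \<and> distinct [axis 3 1, axis 4 1, axis 1 1, X i]"
      by (rule indB[of 3 4 1 2]) (use n in simp_all)
    show ?thesis unfolding good_def 1 by (rule good_of[OF I]) (simp_all add: Lc_simps LX)
  next
    case 2
    have I: "vec.independent {axis 3 1, axis 4 1, axis 2 1, X i} \<and> distinct [axis 3 1, axis 4 1, axis 2 1, X i]"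
      by (rule indB[of 3 4 2 1]) (use n in simp_all)
    show ?thesis unfolding good_def 2 by (rule good_of[OF I]) (simp_all add: Lc_simps LX)
  qed
qed

lemma goodD: "good {(p,1),(p,2),(q,1),(q,2)}"
proof -
  have I: "vec.independent {axis (1::4) (1::bit), axis (2::4) 1, axis (3::4) 1, axis (4::4) 1} \<and>
     distinct [axis (1::4) (1::bit), axis (2::4) 1, axis (3::4) 1, axis (4::4) 1]"
    by (rule indB[of 1 2 3 4]) (simp_all add: axis_comp)
  show ?thesis unfolding good_def by (rule good_of[OF I]) (simp_all add: Lc_simps)
qed

end



context sq begin

lemma cover:
  assumes nb: "\<not> Bad" and sub: "\<sigma> \<subseteq> wed_verts {0..<m} {p,q}" and im: "i < m"
    and fs: "full \<sigma> \<subseteq> {i, Suc i mod m}"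
  shows "\<exists>T. \<sigma> \<subseteq> T \<and> good T"
proof -
  define i' where "i' = Suc i mod m"
  have im': "i' < m" using m3 unfolding i'_def by simp
  have ii: "i' \<noteq> i" using suc_neq[OF im] unfolding i'_def .
  have fs': "full \<sigma> \<subseteq> {i,i'}" using fs unfolding i'_def .
  have elem: "\<And>v k. (v,k) \<in> \<sigma> \<Longrightarrow> (k = 0 \<and> v < m \<and> v \<notin> {p,q}) \<or> (v \<in> {p,q} \<and> (k = 1 \<or> k = 2))"
    using sub unfolding wed_verts_def by auto
  have reg: "\<And>v. (v,0) \<in> \<sigma> \<Longrightarrow> v = i \<or> v = i'" using fs' unfolding full_def by auto
  have both: "\<And>v. (v,1) \<in> \<sigma> \<Longrightarrow> (v,2) \<in> \<sigma> \<Longrightarrow> v = i \<or> v = i'" using fs' unfolding full_def by auto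
  define kp where "kp = (if (p,1) \<in> \<sigma> then 1 else 2::nat)"
  define kq where "kq = (if (q,1) \<in> \<sigma> then 1 else 2::nat)"
  have kp: "kp \<in> {1,2}" and kq: "kq \<in> {1,2}" unfolding kp_def kq_def by auto
  have pk: "k = kp" if "(p,k) \<in> \<sigma>" "p \<noteq> i" "p \<noteq> i'" for k
  proof -
    have "k = 1 \<or> k = 2" using elem[OF that(1)] by auto
    then show ?thesis using both[of p] that unfolding kp_def by auto
  qed
  have qk: "k = kq" if "(q,k) \<in> \<sigma>" "q \<noteq> i" "q \<noteq> i'" for k
  proof -
    have "k = 1 \<or> k = 2" using elem[OF that(1)] by auto
    then show ?thesis using both[of q] that unfolding kq_def by auto
  qed
  have zc: "\<And>z. z \<in> \<sigma> \<Longrightarrow> \<exists>v k. z = (v,k) \<and> (v,k) \<in> \<sigma>" by auto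
  consider (f) "(p = i \<or> p = i') \<and> (q = i \<or> q = i')" | (b) "(p = i \<or> p = i') \<and> q \<noteq> i \<and> q \<noteq> i'"
    | (c) "p \<noteq> i \<and> p \<noteq> i' \<and> (q = i \<or> q = i')" | (a) "p \<noteq> i \<and> p \<noteq> i' \<and> q \<noteq> i \<and> q \<noteq> i'" by blast
  then show ?thesis
  proof cases
    case f
    have "\<sigma> \<subseteq> {(p,1),(p,2),(q,1),(q,2)}"
    proof
      fix z assume "z \<in> \<sigma>"
      then obtain v k where zz: "z = (v,k)" and vk: "(v,k) \<in> \<sigma>" using zc by blast
      show "z \<in> {(p,1),(p,2),(q,1),(q,2)}" using elem[OF vk] reg[of v] f pq vk zz by auto
    qed
    then show ?thesis using goodD by blast
  next
    case b
    define v0 where "v0 = (if p = i then i' else i)"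
    have v0m: "v0 < m" using im im' unfolding v0_def by auto
    have v0pq: "v0 \<notin> {p,q}" using b ii unfolding v0_def by auto
    have adj: "p = Suc v0 mod m \<or> v0 = Suc p mod m" using b unfolding v0_def i'_def by auto
    have "\<sigma> \<subseteq> {(p,1),(p,2),(q,kq),(v0,0)}"
    proof
      fix z assume "z \<in> \<sigma>"
      then obtain v k where zz: "z = (v,k)" and vk: "(v,k) \<in> \<sigma>" using zc by blast
      have "v = q \<Longrightarrow> k = kq" using qk[of k] vk b by blast
      then show "z \<in> {(p,1),(p,2),(q,kq),(v0,0)}" using elem[OF vk] reg[of v] b vk zz unfolding v0_def by auto
    qed
    then show ?thesis using goodB[OF v0m v0pq adj kq] by blast
  next
    case c
    define v0 where "v0 = (if q = i then i' else i)"
    have v0m: "v0 < m" using im im' unfolding v0_def by auto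
    have v0pq: "v0 \<notin> {p,q}" using c ii unfolding v0_def by auto
    have adj: "q = Suc v0 mod m \<or> v0 = Suc q mod m" using c unfolding v0_def i'_def by auto
    have "\<sigma> \<subseteq> {(q,1),(q,2),(p,kp),(v0,0)}"
    proof
      fix z assume "z \<in> \<sigma>"
      then obtain v k where zz: "z = (v,k)" and vk: "(v,k) \<in> \<sigma>" using zc by blast
      have "v = p \<Longrightarrow> k = kp" using pk[of k] vk c by blast
      then show "z \<in> {(q,1),(q,2),(p,kp),(v0,0)}" using elem[OF vk] reg[of v] c vk zz unfolding v0_def by auto
    qed
    then show ?thesis using goodC[OF v0m v0pq adj kp] by blast
  next
    case a
    have "\<sigma> \<subseteq> {(p,kp),(q,kq),(i,0),(i',0)}"
    proof
      fix z assume "z \<in> \<sigma>"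
      then obtain v k where zz: "z = (v,k)" and vk: "(v,k) \<in> \<sigma>" using zc by blast
      have "v = p \<Longrightarrow> k = kp" using pk[of k] vk a by blast
      moreover have "v = q \<Longrightarrow> k = kq" using qk[of k] vk a by blast
      ultimately show "z \<in> {(p,kp),(q,kq),(i,0),(i',0)}" using elem[OF vk] reg[of v] vk zz by auto
    qed
    moreover have "good {(p,kp),(q,kq),(i,0),(i',0)}"
      unfolding i'_def by (rule goodA[OF nb im _ _ kp kq]) (use a i'_def in auto)
    ultimately show ?thesis by blast
  qed
qed

lemma cm: assumes nb: "\<not> Bad" shows "char_map Wd Lc"
  unfolding char_map_def
proof
  fix \<sigma> assume \<sigma>: "\<sigma> \<in> Wd"
  have sub: "\<sigma> \<subseteq> wed_verts {0..<m} {p,q}" using \<sigma> unfolding wed_def by blast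
  have "full \<sigma> \<in> Pm_faces m"
  proof (rule full_of_face[where K = "Pm_faces m"])
    show "\<And>S T. S \<in> Pm_faces m \<Longrightarrow> T \<subseteq> S \<Longrightarrow> T \<in> Pm_faces m" by (rule Pm_down)
    show "finite {0..<m}" by simp
    show "{p,q} \<subseteq> {0..<m}" using pm qm by auto
    show "\<sigma> \<in> Wd" by (rule \<sigma>)
  qed
  then obtain i where im: "i < m" and fs: "full \<sigma> \<subseteq> {i, Suc i mod m}" unfolding Pm_faces_def by blast
  obtain T where ST: "\<sigma> \<subseteq> T" and gT: "good T" using cover[OF nb sub im fs] by blast
  show "inj_on Lc \<sigma> \<and> vec.independent (Lc ` \<sigma>)"
    using gT ST unfolding good_def by (meson image_mono inj_on_subset vec.independent_mono)
qed


lemma pe1: "proj_equiv m Lc {(p, 2), (q, 2)} (wid {p, q} (\<lambda>_. 1)) l1"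
  unfolding proj_equiv_def
proof (intro exI[of _ "pig 1 3"] conjI allI impI)
  show "Vector_Spaces.linear (*s) (*s) (pig 1 3)" by (rule pig_lin)
  show "surj (pig 1 3)" by (rule pig_surj) simp
  have "Lc ` {(p, 2), (q, 2)} = {axis 2 1, axis 4 1}" by (simp add: Lc_simps)
  moreover have "{x. pig 1 3 x = 0} = vec.span {axis 2 1, axis 4 1}"
    by (rule pig_ker) (use exhaust_4 in auto)
  ultimately show "{x. pig 1 3 x = 0} = vec.span (Lc ` {(p, 2), (q, 2)})" by simp
  fix w assume w: "w < m"
  show "pig 1 3 (Lc (wid {p, q} (\<lambda>_. 1) w)) = l1 w"
  proof (cases "w = p \<or> w = q")
    case True
    then show ?thesis using pq by (auto simp: wid_def Lc_simps vec2_eq axis_comp l1p l1q)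
  next
    case False
    then show ?thesis using pq by (auto simp: wid_def Lc_X vec2_eq)
  qed
qed

lemma pe2: "proj_equiv m Lc {(p, 1), (q, 2)} (wid {p, q} (\<lambda>v. if v = p then 2 else 1)) l2"
  unfolding proj_equiv_def
proof (intro exI[of _ "pig 2 3"] conjI allI impI)
  show "Vector_Spaces.linear (*s) (*s) (pig 2 3)" by (rule pig_lin)
  show "surj (pig 2 3)" by (rule pig_surj) simp
  have "Lc ` {(p, 1), (q, 2)} = {axis 1 1, axis 4 1}" by (simp add: Lc_simps)
  moreover have "{x. pig 2 3 x = 0} = vec.span {axis 1 1, axis 4 1}"
    by (rule pig_ker) (use exhaust_4 in auto)
  ultimately show "{x. pig 2 3 x = 0} = vec.span (Lc ` {(p, 1), (q, 2)})" by simp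
  fix w assume w: "w < m"
  show "pig 2 3 (Lc (wid {p, q} (\<lambda>v. if v = p then 2 else 1) w)) = l2 w"
  proof (cases "w = p \<or> w = q")
    case True
    then show ?thesis using pq by (auto simp: wid_def Lc_simps vec2_eq axis_comp l2p l2q)
  next
    case False
    then show ?thesis using pq A12[OF w] by (auto simp: wid_def Lc_X vec2_eq)
  qed
qed

lemma pe3: "proj_equiv m Lc {(p, 2), (q, 1)} (wid {p, q} (\<lambda>v. if v = p then 1 else 2)) l3"
  unfolding proj_equiv_def
proof (intro exI[of _ "pig 1 4"] conjI allI impI)
  show "Vector_Spaces.linear (*s) (*s) (pig 1 4)" by (rule pig_lin)
  show "surj (pig 1 4)" by (rule pig_surj) simp
  have "Lc ` {(p, 2), (q, 1)} = {axis 2 1, axis 3 1}" by (simp add: Lc_simps)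
  moreover have "{x. pig 1 4 x = 0} = vec.span {axis 2 1, axis 3 1}"
    by (rule pig_ker) (use exhaust_4 in auto)
  ultimately show "{x. pig 1 4 x = 0} = vec.span (Lc ` {(p, 2), (q, 1)})" by simp
  fix w assume w: "w < m"
  show "pig 1 4 (Lc (wid {p, q} (\<lambda>v. if v = p then 1 else 2) w)) = l3 w"
  proof (cases "w = p \<or> w = q")
    case True
    then show ?thesis using pq by (auto simp: wid_def Lc_simps vec2_eq axis_comp l3p l3q)
  next
    case False
    then show ?thesis using pq A13[OF w] by (auto simp: wid_def Lc_X vec2_eq)
  qed
qed

lemma L2:
  assumes "\<not> Bad"
  shows "\<exists>\<Lambda> :: nat \<times> nat \<Rightarrow> bit^4.
             char_map (wed {0..<m} {p, q} (Pm_faces m)) \<Lambda> \<and>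
             proj_equiv m \<Lambda> {(p, 2), (q, 2)} (wid {p, q} (\<lambda>_. 1)) l1 \<and>
             proj_equiv m \<Lambda> {(p, 1), (q, 2)} (wid {p, q} (\<lambda>v. if v = p then 2 else 1)) l2 \<and>
             proj_equiv m \<Lambda> {(p, 2), (q, 1)} (wid {p, q} (\<lambda>v. if v = p then 1 else 2)) l3"
  using cm[OF assms] pe1 pe2 pe3 by blast

end

theorem lemma3:
  fixes m p q :: nat and l1 l2 l3 :: "nat \<Rightarrow> bit^2"
  assumes "m \<ge> 3" and "p < m" and "q < m" and "p \<noteq> q"
    and "char_Pm m l1" and "char_Pm m l2" and "char_Pm m l3"
    and "l1 p = va" and "l2 p = va" and "l3 p = va"
    and "l1 q = vb" and "l2 q = vb" and "l3 q = vb"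
    and "p_adjacent m p l1 l2" and "p_adjacent m q l1 l3"
  shows "((\<exists>\<Lambda> :: nat \<times> nat \<Rightarrow> bit^4.
             char_map (wed {0..<m} {p, q} (Pm_faces m)) \<Lambda> \<and>
             proj_equiv m \<Lambda> {(p, 2), (q, 2)} (wid {p, q} (\<lambda>_. 1)) l1 \<and>
             proj_equiv m \<Lambda> {(p, 1), (q, 2)} (wid {p, q} (\<lambda>v. if v = p then 2 else 1)) l2 \<and>
             proj_equiv m \<Lambda> {(p, 2), (q, 1)} (wid {p, q} (\<lambda>v. if v = p then 1 else 2)) l3)
          \<longleftrightarrow> nbhd m (sdiff_maps m l1 l2) \<inter> sdiff_maps m l1 l3 = {})
       \<and> (nbhd m (sdiff_maps m l1 l2) \<inter> sdiff_maps m l1 l3 = {}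
          \<longleftrightarrow> nbhd m (sdiff_maps m l1 l2) \<inter> nbhd m (sdiff_maps m l1 l3) = {})"
proof -
  have A12: "l2 v $ 1 = l1 v $ 1" if v: "v < m" for v
  proof -
    have "l1 v = l1 p \<longleftrightarrow> l2 v = l2 p" by (rule adj_lemma[OF assms(14) assms(2) assms(5) assms(6) v])
    then have "l1 v = va \<longleftrightarrow> l2 v = va" using assms(8,9) by simp
    then have "l2 v $ 1 = 0 \<longleftrightarrow> l1 v $ 1 = 0" using is_va[OF assms(5) v] is_va[OF assms(6) v] by simp
    then show ?thesis by (rule bit_eq_from0)
  qed
  have A13: "l3 v $ 2 = l1 v $ 2" if v: "v < m" for v
  proof -
    have "l1 v = l1 q \<longleftrightarrow> l3 v = l3 q" by (rule adj_lemma[OF assms(15) assms(3) assms(5) assms(7) v])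
    then have "l1 v = vb \<longleftrightarrow> l3 v = vb" using assms(11,13) by simp
    then have "l3 v $ 2 = 0 \<longleftrightarrow> l1 v $ 2 = 0" using is_vb[OF assms(5) v] is_vb[OF assms(7) v] by simp
    then show ?thesis by (rule bit_eq_from0)
  qed
  interpret S: sq m p q l1 l2 l3
    by (unfold_locales) (use assms A12 A13 in auto)
  show ?thesis using S.L1 S.L2 S.cond2_iff S.cond23 by blast
qed



end
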